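(* Let $(M,\varphi,\xi_\alpha,\eta^\alpha,g)$, $\alpha\in\{1,2\}$, be a Lorentz globally framed $f$-manifold with $\xi_1$ timelike, and fix $p\in M$. Let $F:(T_pM)^4\to\mathbb{R}$ be a curvature-like map such that for all $x,y,v\in\operatorname{Im}\varphi_p$ and all $\alpha,\beta,\gamma\in\{1,2\}$: $F(x,\xi_\alpha,y,v)=0$, $F(\xi_\alpha,x,\xi_\beta,y)=\varepsilon_\alpha\varepsilon_\beta\, g(x,y)$, $F(\xi_\alpha,x,\xi_\beta,\xi_\gamma)=0$, and $F(\xi_1,\xi_2,\xi_1,\xi_2)=0$. Then the following are equivalent: (a) $F(u,y,u,y)=0$ for every $u\in N_\varphi(\xi_1)$ and every $y\in u^\perp\cap\operatorname{Im}\varphi_p$ (i.e. $F$ vanishes on every degenerate plane $\mathrm{span}\{u,y\}$ of this type); (b) $F(x,y,v,z)=g(S_*(x,y)v,z)-g(S^*(x,y)v,z)$ for all $x,y,v,z\in T_pM$.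
   Context: A Lorentz globally framed $f$-manifold $(M,\varphi,\xi_\alpha,\eta^\alpha,g)$, $\alpha\in\{1,2\}$, is a manifold of dimension $2n+2$ with a $(1,1)$-tensor field $\varphi$ of constant rank $2n$, vector fields $\xi_1,\xi_2$ and $1$-forms $\eta^1,\eta^2$ with $\varphi^2=-I+\eta^1\otimes\xi_1+\eta^2\otimes\xi_2$, $\eta^\alpha(\xi_\beta)=\delta^\alpha_\beta$, and a Lorentz metric $g$ with $g(\varphi X,\varphi Y)=g(X,Y)-\sum_\alpha\varepsilon_\alpha\eta^\alpha(X)\eta^\alpha(Y)$, where $\varepsilon_\alpha=g(\xi_\alpha,\xi_\alpha)=\pm1$ (here $\varepsilon_1=-1$, $\varepsilon_2=1$). Put $\tilde\xi=\xi_1+\xi_2$ and $\tilde\eta=\sum_\alpha\varepsilon_\alpha\eta^\alpha$. A curvature-like map $F:V^4\to\mathbb{R}$ is a multilinear map with $F(y,x,z,w)=-F(x,y,z,w)$, $F(z,w,x,y)=F(x,y,z,w)$, and $F(x,y,z,w)+F(x,z,w,y)+F(x,w,y,z)=0$. $N_\varphi(\xi_1)=\{(\xi_1)_p+x: x\in\operatorname{Im}\varphi_p,\ g(x,x)=1\}$. The $(1,3)$-tensors $S^*,S_*$ are $S^*(x,y)v=\tilde\eta(y)\tilde\eta(v)x-\tilde\eta(x)\tilde\eta(v)y+g(y,v)\tilde\eta(x)\tilde\xi-g(x,v)\tilde\eta(y)\tilde\xi$, $S_*(x,y)v=-g(\varphi y,\varphi v)\varphi^2x+g(\varphi x,\varphi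 v)\varphi^2y$. *)

theory Defs
  imports "HOL-Analysis.Analysis"
begin

text \<open>Pointwise (linear-algebraic) model of a Lorentz globally framed f-manifold at a point p:
  the tangent space T_pM is a finite-dimensional real vector space 'v.\<close>

definition eps :: "nat \<Rightarrow> real" where
  "eps \<alpha> = (if \<alpha> = 1 then -1 else 1)"

definition neg_definite_on :: "('v \<Rightarrow> 'v \<Rightarrow> real) \<Rightarrow> 'v::real_vector set \<Rightarrow> bool" where
  "neg_definite_on g W \<longleftrightarrow> (\<forall>w\<in>W. w \<noteq> 0 \<longrightarrow> g w w < 0)"

definition lorentz_metric :: "('v::euclidean_space \<Rightarrow> 'v \<Rightarrow> real) \<Rightarrow> bool" where
  "lorentz_metric g \<longleftrightarrow> bilinear g \<and> (\<forall>x y. g x y = g y x)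
     \<and> (\<forall>x. (\<forall>y. g x y = 0) \<longrightarrow> x = 0)
     \<and> (\<exists>W. subspace W \<and> dim W = 1 \<and> neg_definite_on g W)
     \<and> (\<forall>W. subspace W \<and> neg_definite_on g W \<longrightarrow> dim W \<le> 1)"

definition lorentz_gf_f_space ::
  "nat \<Rightarrow> ('v::euclidean_space \<Rightarrow> 'v) \<Rightarrow> (nat \<Rightarrow> 'v) \<Rightarrow> (nat \<Rightarrow> 'v \<Rightarrow> real)
     \<Rightarrow> ('v \<Rightarrow> 'v \<Rightarrow> real) \<Rightarrow> bool" where
  "lorentz_gf_f_space n \<phi> \<xi> \<eta> g \<longleftrightarrow>
     DIM('v) = 2*n + 2 \<and>
     linear \<phi> \<and> dim (range \<phi>) = 2*n \<and>
     (\<forall>\<alpha>\<in>{1,2}. linear (\<eta> \<alpha>)) \<and>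
     (\<forall>x. \<phi> (\<phi> x) = - x + \<eta> 1 x *\<^sub>R \<xi> 1 + \<eta> 2 x *\<^sub>R \<xi> 2) \<and>
     (\<forall>\<alpha>\<in>{1,2}. \<forall>\<beta>\<in>{1,2}. \<eta> \<alpha> (\<xi> \<beta>) = (if \<alpha> = \<beta> then 1 else 0)) \<and>
     lorentz_metric g \<and>
     (\<forall>\<alpha>\<in>{1,2}. g (\<xi> \<alpha>) (\<xi> \<alpha>) = eps \<alpha>) \<and>
     (\<forall>x y. g (\<phi> x) (\<phi> y) = g x y - (\<Sum>\<alpha>\<in>{1,2}. eps \<alpha> * \<eta> \<alpha> x * \<eta> \<alpha> y))"

definition curvature_like :: "('v::real_vector \<Rightarrow> 'v \<Rightarrow> 'v \<Rightarrow> 'v \<Rightarrow> real) \<Rightarrow> bool" where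
  "curvature_like F \<longleftrightarrow>
     (\<forall>y z w. linear (\<lambda>x. F x y z w)) \<and> (\<forall>x z w. linear (\<lambda>y. F x y z w)) \<and>
     (\<forall>x y w. linear (\<lambda>z. F x y z w)) \<and> (\<forall>x y z. linear (\<lambda>w. F x y z w)) \<and>
     (\<forall>x y z w. F y x z w = - F x y z w) \<and>
     (\<forall>x y z w. F z w x y = F x y z w) \<and>
     (\<forall>x y z w. F x y z w + F x z w y + F x w y z = 0)"

definition xi_tilde :: "(nat \<Rightarrow> 'v::real_vector) \<Rightarrow> 'v" where
  "xi_tilde \<xi> = \<xi> 1 + \<xi> 2"

definition eta_tilde :: "(nat \<Rightarrow> 'v \<Rightarrow> real) \<Rightarrow> 'v \<Rightarrow> real" where
  "eta_tilde \<eta> x = (\<Sum>\<alpha>\<in>{1,2}. eps \<alpha> * \<eta> \<alpha> x)"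

definition N_phi :: "('v::real_vector \<Rightarrow> 'v) \<Rightarrow> ('v \<Rightarrow> 'v \<Rightarrow> real) \<Rightarrow> 'v \<Rightarrow> 'v set" where
  "N_phi \<phi> g \<xi>1 = {\<xi>1 + x | x. x \<in> range \<phi> \<and> g x x = 1}"

definition S_upper :: "(nat \<Rightarrow> 'v::real_vector) \<Rightarrow> (nat \<Rightarrow> 'v \<Rightarrow> real) \<Rightarrow> ('v \<Rightarrow> 'v \<Rightarrow> real)
    \<Rightarrow> 'v \<Rightarrow> 'v \<Rightarrow> 'v \<Rightarrow> 'v" where
  "S_upper \<xi> \<eta> g x y v =
     (eta_tilde \<eta> y * eta_tilde \<eta> v) *\<^sub>R x - (eta_tilde \<eta> x * eta_tilde \<eta> v) *\<^sub>R y
     + (g y v * eta_tilde \<eta> x) *\<^sub>R xi_tilde \<xi> - (g x v * eta_tilde \<eta> y) *\<^sub>R xi_tilde \<xi>"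

definition S_lower :: "('v::real_vector \<Rightarrow> 'v) \<Rightarrow> ('v \<Rightarrow> 'v \<Rightarrow> real) \<Rightarrow> 'v \<Rightarrow> 'v \<Rightarrow> 'v \<Rightarrow> 'v" where
  "S_lower \<phi> g x y v = - (g (\<phi> y) (\<phi> v)) *\<^sub>R \<phi> (\<phi> x) + (g (\<phi> x) (\<phi> v)) *\<^sub>R \<phi> (\<phi> y)"

end

theory Submission
  imports Defs
begin
declare One_nat_def[simp del]

locale LF =
  fixes n :: nat and \<phi> :: "'v::euclidean_space \<Rightarrow> 'v" and \<xi> :: "nat \<Rightarrow> 'v"
    and \<eta> :: "nat \<Rightarrow> 'v \<Rightarrow> real" and g :: "'v \<Rightarrow> 'v \<Rightarrow> real"
  assumes str: "lorentz_gf_f_space n \<phi> \<xi> \<eta> g"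
begin

lemma dimV: "DIM('v) = 2*n + 2" using str unfolding lorentz_gf_f_space_def by auto
lemma lin_phi: "linear \<phi>" using str unfolding lorentz_gf_f_space_def by auto
lemma dim_phi: "dim (range \<phi>) = 2*n" using str unfolding lorentz_gf_f_space_def by auto
lemma lin_eta: "\<alpha> \<in> {1,2} \<Longrightarrow> linear (\<eta> \<alpha>)" using str unfolding lorentz_gf_f_space_def by auto
lemma phi2: "\<phi> (\<phi> x) = - x + \<eta> 1 x *\<^sub>R \<xi> 1 + \<eta> 2 x *\<^sub>R \<xi> 2" using str unfolding lorentz_gf_f_space_def by auto
lemma eta_xi: "\<alpha> \<in> {1,2} \<Longrightarrow> \<beta> \<in> {1,2} \<Longrightarrow> \<eta> \<alpha> (\<xi> \<beta>) = (if \<alpha> = \<beta> then 1 else 0)" using str unfolding lorentz_gf_f_space_def by auto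
lemma lm: "lorentz_metric g" using str unfolding lorentz_gf_f_space_def by auto
lemma gxx: "\<alpha> \<in> {1,2} \<Longrightarrow> g (\<xi> \<alpha>) (\<xi> \<alpha>) = eps \<alpha>" using str unfolding lorentz_gf_f_space_def by auto
lemma gphi: "g (\<phi> x) (\<phi> y) = g x y - (\<Sum>\<alpha>\<in>{1,2}. eps \<alpha> * \<eta> \<alpha> x * \<eta> \<alpha> y)" using str unfolding lorentz_gf_f_space_def by auto

lemma bil: "bilinear g" using lm unfolding lorentz_metric_def by auto
lemma gsym: "g x y = g y x" using lm unfolding lorentz_metric_def by auto
lemma nondeg: "(\<And>y. g x y = 0) \<Longrightarrow> x = 0" using lm unfolding lorentz_metric_def by auto
lemma negdim: "subspace W \<Longrightarrow> neg_definite_on g W \<Longrightarrow> dim W \<le> 1" using lm unfolding lorentz_metric_def by auto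

lemma g_simps[simp]: "g (a + b) c = g a c + g b c" "g c (a + b) = g c a + g c b"
  "g (r *\<^sub>R a) c = r * g a c" "g c (r *\<^sub>R a) = r * g c a"
  "g (a - b) c = g a c - g b c" "g c (a - b) = g c a - g c b"
  "g (- a) c = - g a c" "g c (- a) = - g c a" "g 0 c = 0" "g c 0 = 0"
  using bil by (auto simp: bilinear_ladd bilinear_radd bilinear_lmul bilinear_rmul bilinear_lsub bilinear_rsub
     bilinear_lneg bilinear_rneg bilinear_lzero bilinear_rzero)

lemma eta_simps[simp]: 
  "\<eta> 1 (a + b) = \<eta> 1 a + \<eta> 1 b" "\<eta> 1 (r *\<^sub>R a) = r * \<eta> 1 a" "\<eta> 1 (a - b) = \<eta> 1 a - \<eta> 1 b" "\<eta> 1 (- a) = - \<eta> 1 a" "\<eta> 1 0 = 0"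
  "\<eta> 2 (a + b) = \<eta> 2 a + \<eta> 2 b" "\<eta> 2 (r *\<^sub>R a) = r * \<eta> 2 a" "\<eta> 2 (a - b) = \<eta> 2 a - \<eta> 2 b" "\<eta> 2 (- a) = - \<eta> 2 a" "\<eta> 2 0 = 0"
  using lin_eta[of 1] lin_eta[of 2] by (auto simp: linear_add linear_scale linear_diff linear_neg linear_0)

lemma eta_xi_simps[simp]: "\<eta> 1 (\<xi> 1) = 1" "\<eta> 1 (\<xi> 2) = 0" "\<eta> 2 (\<xi> 1) = 0" "\<eta> 2 (\<xi> 2) = 1"
  using eta_xi by auto

lemma phi_simps[simp]: "\<phi> (a + b) = \<phi> a + \<phi> b" "\<phi> (r *\<^sub>R a) = r *\<^sub>R \<phi> a" "\<phi> (a - b) = \<phi> a - \<phi> b" "\<phi> (- a) = - \<phi> a" "\<phi> 0 = 0"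
  using lin_phi by (auto simp: linear_add linear_scale linear_diff linear_neg linear_0)

lemma phi_xi_in: "\<phi> (\<xi> \<beta>) \<in> span {\<xi> 1, \<xi> 2}" if "\<beta> \<in> {1,2}"
proof -
  have "\<phi> (\<phi> (\<phi> (\<xi> \<beta>))) = - \<phi> (\<xi> \<beta>) + \<eta> 1 (\<phi> (\<xi> \<beta>)) *\<^sub>R \<xi> 1 + \<eta> 2 (\<phi> (\<xi> \<beta>)) *\<^sub>R \<xi> 2"
    by (rule phi2)
  moreover have "\<phi> (\<phi> (\<xi> \<beta>)) = 0" using that by (auto simp only: phi2 insert_iff empty_iff eta_xi_simps) simp_all
  ultimately have "\<phi> (\<xi> \<beta>) = \<eta> 1 (\<phi> (\<xi> \<beta>)) *\<^sub>R \<xi> 1 + \<eta> 2 (\<phi> (\<xi> \<beta>)) *\<^sub>R \<xi> 2"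
    by (simp add: algebra_simps)
  then show ?thesis by (metis span_add span_base span_scale insertI1 insertI2 insert_commute)
qed

lemma inter0: "range \<phi> \<inter> span {\<xi> 1, \<xi> 2} \<subseteq> {0}"
proof -
  have s1: "subspace (range \<phi>)" using lin_phi by (simp add: linear_subspace_image)
  have s2: "subspace (span {\<xi> 1, \<xi> 2})" by simp
  have "{x + y |x y. x \<in> range \<phi> \<and> y \<in> span {\<xi> 1, \<xi> 2}} = UNIV"
  proof -
    { fix x :: 'v
      have "x = \<phi> (- \<phi> x) + (\<eta> 1 x *\<^sub>R \<xi> 1 + \<eta> 2 x *\<^sub>R \<xi> 2)" by (simp add: phi2)
      moreover have "\<eta> 1 x *\<^sub>R \<xi> 1 + \<eta> 2 x *\<^sub>R \<xi> 2 \<in> span {\<xi> 1, \<xi> 2}"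
        by (simp add: span_add span_base span_scale)
      ultimately have "x \<in> {x + y |x y. x \<in> range \<phi> \<and> y \<in> span {\<xi> 1, \<xi> 2}}" by blast }
    then show ?thesis by auto
  qed
  with dim_sums_Int[OF s1 s2] have "DIM('v) + dim (range \<phi> \<inter> span {\<xi> 1, \<xi> 2}) = 2*n + dim {\<xi> 1, \<xi> 2}"
    using dim_phi by simp
  moreover have "dim {\<xi> 1, \<xi> 2} \<le> 2"
    using dim_le_card[of "{\<xi> 1, \<xi> 2}" "{\<xi> 1, \<xi> 2}"] by (simp add: span_base card_insert_le_m1) (metis One_nat_def card.empty card_insert_if finite.emptyI finite_insert insert_absorb2 le_SucI numeral_2_eq_2 singleton_iff le_refl one_le_numeral)
  ultimately have "dim (range \<phi> \<inter> span {\<xi> 1, \<xi> 2}) = 0" using dimV by linarith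
  then show ?thesis by (simp only: dim_eq_0)
qed

lemma phi_xi[simp]: "\<phi> (\<xi> 1) = 0" "\<phi> (\<xi> 2) = 0"
  using inter0 phi_xi_in[of 1] phi_xi_in[of 2] by auto


lemma eps_simps[simp]: "eps 1 = -1" "eps 2 = 1" by (auto simp: eps_def)

lemma g_xi_gen: "\<beta> \<in> {1,2} \<Longrightarrow> g x (\<xi> \<beta>) = eps \<beta> * \<eta> \<beta> x"
proof -
  assume b: "\<beta> \<in> {1,2}"
  have "g (\<phi> x) (\<phi> (\<xi> \<beta>)) = 0" using b by auto
  then have "g x (\<xi> \<beta>) = (\<Sum>\<alpha>\<in>{1,2}. eps \<alpha> * \<eta> \<alpha> x * \<eta> \<alpha> (\<xi> \<beta>))" using gphi[of x "\<xi> \<beta>"] by simp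
  then show ?thesis using b by auto
qed

lemma g_xi[simp]: "g x (\<xi> 1) = - \<eta> 1 x" "g x (\<xi> 2) = \<eta> 2 x" "g (\<xi> 1) x = - \<eta> 1 x" "g (\<xi> 2) x = \<eta> 2 x"
  using g_xi_gen[of 1 x] g_xi_gen[of 2 x] gsym[of x "\<xi> 1"] gsym[of x "\<xi> 2"] by auto

lemma eta_phi[simp]: "\<eta> 1 (\<phi> w) = 0" "\<eta> 2 (\<phi> w) = 0"
proof -
  have "\<phi> (\<phi> (\<phi> w)) = - \<phi> w + \<eta> 1 (\<phi> w) *\<^sub>R \<xi> 1 + \<eta> 2 (\<phi> w) *\<^sub>R \<xi> 2" by (rule phi2)
  moreover have "\<phi> (\<phi> (\<phi> w)) = - \<phi> w" by (simp add: phi2)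
  ultimately have e: "\<eta> 1 (\<phi> w) *\<^sub>R \<xi> 1 + \<eta> 2 (\<phi> w) *\<^sub>R \<xi> 2 = 0" by simp
  have "\<eta> 1 (\<eta> 1 (\<phi> w) *\<^sub>R \<xi> 1 + \<eta> 2 (\<phi> w) *\<^sub>R \<xi> 2) = 0" "\<eta> 2 (\<eta> 1 (\<phi> w) *\<^sub>R \<xi> 1 + \<eta> 2 (\<phi> w) *\<^sub>R \<xi> 2) = 0"
    by (simp_all only: e eta_simps)
  then show "\<eta> 1 (\<phi> w) = 0" "\<eta> 2 (\<phi> w) = 0" by simp_all
qed

definition P where "P x = x - \<eta> 1 x *\<^sub>R \<xi> 1 - \<eta> 2 x *\<^sub>R \<xi> 2"

lemma phi2P: "\<phi> (\<phi> x) = - P x" by (simp add: phi2 P_def algebra_simps)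
lemma P_in: "P x \<in> range \<phi>" by (metis phi2P phi_simps(4) rangeI minus_minus)
lemma eta_P[simp]: "\<eta> 1 (P x) = 0" "\<eta> 2 (P x) = 0" by (simp_all add: P_def)
lemma P_range: "y \<in> range \<phi> \<Longrightarrow> P y = y" by (auto simp: P_def)
lemma eta_range: "y \<in> range \<phi> \<Longrightarrow> \<eta> 1 y = 0" "y \<in> range \<phi> \<Longrightarrow> \<eta> 2 y = 0" by auto
lemma dec: "P x + \<eta> 1 x *\<^sub>R \<xi> 1 + \<eta> 2 x *\<^sub>R \<xi> 2 = x" by (simp add: P_def)
lemma range_sub: "subspace (range \<phi>)" using lin_phi by (simp add: linear_subspace_image)

lemma range_nonneg: "w \<in> range \<phi> \<Longrightarrow> g w w \<ge> 0"
proof (rule ccontr)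
  assume w: "w \<in> range \<phi>" and neg: "\<not> g w w \<ge> 0"
  then have w0: "w \<noteq> 0" by auto
  let ?W = "span {w, \<xi> 1}"
  have nd: "neg_definite_on g ?W"
    unfolding neg_definite_on_def
  proof (intro ballI impI)
    fix u assume "u \<in> ?W" "u \<noteq> 0"
    then obtain c where "u - c *\<^sub>R w \<in> span {\<xi> 1}" by (auto simp: span_insert)
    then obtain d where "u - c *\<^sub>R w = d *\<^sub>R \<xi> 1" by (auto simp: span_singleton)
    then have u: "u = c *\<^sub>R w + d *\<^sub>R \<xi> 1" by (simp add: algebra_simps)
    have e: "\<eta> 1 w = 0" using w by auto
    have gu: "g u u = c*c * g w w - d * d" using e by (simp add: u gsym[of "\<xi> 1" w] algebra_simps)
    have "c \<noteq> 0 \<or> d \<noteq> 0" using \<open>u \<noteq> 0\<close> u by auto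
    moreover have A: "c*c*g w w \<le> 0" using neg by (simp add: mult_nonneg_nonpos)
    moreover have "c \<noteq> 0 \<Longrightarrow> c*c*g w w < 0" using neg by (intro mult_pos_neg) auto
    moreover have "d \<noteq> 0 \<Longrightarrow> d*d > 0" by (metis not_real_square_gt_zero)
    moreover have "d * d \<ge> 0" by simp
    ultimately show "g u u < 0" using gu by linarith
  qed
  have wx: "w \<noteq> \<xi> 1" using eta_range(1)[OF w] by auto
  have ind: "independent {w, \<xi> 1}"
  proof -
    note wx
    moreover have "\<xi> 1 \<notin> span {w}"
    proof
      assume "\<xi> 1 \<in> span {w}"
      then obtain k where "\<xi> 1 = k *\<^sub>R w" by (auto simp: span_singleton)
      then have "\<eta> 1 (\<xi> 1) = k * \<eta> 1 w" by simp
      then show False using eta_range(1)[OF w] by simp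
    qed
    moreover have "w \<notin> span {\<xi> 1}"
      using w w0 by (auto simp: span_singleton dest!: eta_range(1))
    moreover have "\<xi> 1 \<noteq> 0"
    proof
      assume "\<xi> 1 = 0" then have "\<eta> 1 (\<xi> 1) = 0" by simp
      then show False by simp
    qed
    ultimately show ?thesis using w0 by (simp add: independent_insert)
  qed
  have "dim ?W = 2" using ind wx by (simp add: dim_eq_card_independent)
  with negdim[OF subspace_span nd] show False by simp
qed

lemma g_expand_xi: "g x z = g (P x) (P z) - \<eta> 1 x * \<eta> 1 z + \<eta> 2 x * \<eta> 2 z"
proof -
  have "g x z = g (P x + \<eta> 1 x *\<^sub>R \<xi> 1 + \<eta> 2 x *\<^sub>R \<xi> 2) (P z + \<eta> 1 z *\<^sub>R \<xi> 1 + \<eta> 2 z *\<^sub>R \<xi> 2)"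
    by (simp only: dec)
  then show ?thesis by (simp add: algebra_simps)
qed

lemma range_pos: "w \<in> range \<phi> \<Longrightarrow> w \<noteq> 0 \<Longrightarrow> g w w > 0"
proof (rule ccontr)
  assume w: "w \<in> range \<phi>" "w \<noteq> 0" "\<not> g w w > 0"
  then have w0: "g w w = 0" using range_nonneg by force
  have orth: "g w z = 0" if z: "z \<in> range \<phi>" for z
  proof (rule ccontr)
    assume c: "g w z \<noteq> 0"
    define s where "s = g z z"
    have s0: "s \<ge> 0" using z range_nonneg s_def by auto
    have s1: "s + 1 > 0" "s + 1 \<noteq> 0" using s0 by auto
    define t where "t = - g w z / (s + 1)"
    have "w + t *\<^sub>R z \<in> range \<phi>" using w z range_sub by (simp add: subspace_add subspace_scale)
    then have ge: "0 \<le> g (w + t *\<^sub>R z) (w + t *\<^sub>R z)" by (rule range_nonneg)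
    have ex: "g (w + t *\<^sub>R z) (w + t *\<^sub>R z) = 2 * t * g w z + t * t * s" using w0 by (simp add: s_def gsym[of z w] algebra_simps)
    have ts: "t * (s + 1) = - g w z" using s1 by (simp add: t_def)
    have "(s + 1) * (s + 1) * (2 * t * g w z + t * t * s) = 2 * g w z * (t * (s + 1)) * (s + 1) + (t * (s + 1)) * (t * (s + 1)) * s"
      by (simp add: algebra_simps)
    also have "\<dots> = - (g w z * g w z * (s + 2))" unfolding ts by (simp add: algebra_simps)
    finally have eq: "(s + 1) * (s + 1) * (2 * t * g w z + t * t * s) = - (g w z * g w z * (s + 2))" .
    have "g w z * g w z > 0" using c by (metis not_real_square_gt_zero)
    then have "- (g w z * g w z * (s + 2)) < 0" using s0 by (simp add: mult_pos_pos)
    moreover have "(s + 1) * (s + 1) * (2 * t * g w z + t * t * s) \<ge> 0" using ge ex s1 by simp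
    ultimately show False using eq by linarith
  qed
  have "g w x = 0" for x
  proof -
    have "g w x = g (P w) (P x) - \<eta> 1 w * \<eta> 1 x + \<eta> 2 w * \<eta> 2 x" by (rule g_expand_xi)
    then show ?thesis using w orth[OF P_in[of x]] by (simp add: P_range eta_range)
  qed
  then show False using nondeg w by blast
qed

lemma PP[simp]: "P (P x) = P x" using P_range P_in by blast
lemma P_in_simp[simp]: "P x \<in> range \<phi>" by (rule P_in)

end

lemma polarize:
  fixes G :: "'v::real_vector \<Rightarrow> 'v \<Rightarrow> 'v \<Rightarrow> 'v \<Rightarrow> real" and S :: "'v set"
  assumes addS: "\<And>a b. a \<in> S \<Longrightarrow> b \<in> S \<Longrightarrow> a + b \<in> S"
    and a1: "\<And>a b y v z. a \<in> S \<Longrightarrow> b \<in> S \<Longrightarrow> y \<in> S \<Longrightarrow> v \<in> S \<Longrightarrow> z \<in> S \<Longrightarrow> G (a + b) y v z = G a y v z + G b y v z"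
    and a2: "\<And>a b x v z. a \<in> S \<Longrightarrow> b \<in> S \<Longrightarrow> x \<in> S \<Longrightarrow> v \<in> S \<Longrightarrow> z \<in> S \<Longrightarrow> G x (a + b) v z = G x a v z + G x b v z"
    and a3: "\<And>a b x y z. a \<in> S \<Longrightarrow> b \<in> S \<Longrightarrow> x \<in> S \<Longrightarrow> y \<in> S \<Longrightarrow> z \<in> S \<Longrightarrow> G x y (a + b) z = G x y a z + G x y b z"
    and a4: "\<And>a b x y v. a \<in> S \<Longrightarrow> b \<in> S \<Longrightarrow> x \<in> S \<Longrightarrow> y \<in> S \<Longrightarrow> v \<in> S \<Longrightarrow> G x y v (a + b) = G x y v a + G x y v b"
    and as: "\<And>x y v z. x \<in> S \<Longrightarrow> y \<in> S \<Longrightarrow> v \<in> S \<Longrightarrow> z \<in> S \<Longrightarrow> G y x v z = - G x y v z"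
    and ps: "\<And>x y v z. x \<in> S \<Longrightarrow> y \<in> S \<Longrightarrow> v \<in> S \<Longrightarrow> z \<in> S \<Longrightarrow> G v z x y = G x y v z"
    and bi: "\<And>x y v z. x \<in> S \<Longrightarrow> y \<in> S \<Longrightarrow> v \<in> S \<Longrightarrow> z \<in> S \<Longrightarrow> G x y v z + G x v z y + G x z y v = 0"
    and sec: "\<And>x y. x \<in> S \<Longrightarrow> y \<in> S \<Longrightarrow> G x y x y = 0"
    and x: "x \<in> S" and y: "y \<in> S" and v: "v \<in> S" and z: "z \<in> S"
  shows "G x y v z = 0"
proof -
  have s1: "G a b a c = 0" if "a \<in> S" "b \<in> S" "c \<in> S" for a b c
  proof -
    have "0 = G a (b + c) a (b + c)" using sec[of a "b + c"] that addS by simp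
    also have "\<dots> = G a b a b + G a b a c + G a c a b + G a c a c"
      using that addS[of b c] a2[of b c a a "b + c"] a4[of b c a b a] a4[of b c a c a] by simp
    finally show ?thesis using sec[of a b] sec[of a c] ps[of a b a c] that by linarith
  qed
  have s2: "G a b c d = - G c b a d" if "a \<in> S" "b \<in> S" "c \<in> S" "d \<in> S" for a b c d
  proof -
    have "0 = G (a + c) b (a + c) d" using s1[of "a + c" b d] that addS by simp
    also have "\<dots> = G a b a d + G a b c d + G c b a d + G c b c d"
      using that addS[of a c] a1[of a c b "a + c" d] a3[of a c a b d] a3[of a c c b d] by simp
    finally show ?thesis using s1[of a b d] s1[of c b d] that by linarith
  qed
  have A1: "G x v z y = G x y v z"
    using s2[of x v z y] ps[of x y z v] as[of v z x y] ps[of x y v z] x y v z by linarith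
  have A2: "G x z y v = G x y v z"
    using s2[of x z y v] ps[of x v y z] as[of z y x v] ps[of x v z y] A1 x y v z by linarith
  show ?thesis using bi[OF x y v z] A1 A2 by linarith
qed

locale LF2 = LF n \<phi> \<xi> \<eta> g for n :: nat and \<phi> :: "'v::euclidean_space \<Rightarrow> 'v" and \<xi> \<eta> g +
  fixes F :: "'v \<Rightarrow> 'v \<Rightarrow> 'v \<Rightarrow> 'v \<Rightarrow> real"
  assumes F: "curvature_like F"
    and h1: "\<And>x y v \<alpha>. x \<in> range \<phi> \<Longrightarrow> y \<in> range \<phi> \<Longrightarrow> v \<in> range \<phi> \<Longrightarrow> \<alpha> \<in> {1,2}
               \<Longrightarrow> F x (\<xi> \<alpha>) y v = 0"
    and h2: "\<And>x y \<alpha> \<beta>. x \<in> range \<phi> \<Longrightarrow> y \<in> range \<phi> \<Longrightarrow> \<alpha> \<in> {1,2} \<Longrightarrow> \<beta> \<in> {1,2}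
               \<Longrightarrow> F (\<xi> \<alpha>) x (\<xi> \<beta>) y = eps \<alpha> * eps \<beta> * g x y"
    and h3: "\<And>x \<alpha> \<beta> \<gamma>. x \<in> range \<phi> \<Longrightarrow> \<alpha> \<in> {1,2} \<Longrightarrow> \<beta> \<in> {1,2} \<Longrightarrow> \<gamma> \<in> {1,2}
               \<Longrightarrow> F (\<xi> \<alpha>) x (\<xi> \<beta>) (\<xi> \<gamma>) = 0"
    and h4: "F (\<xi> 1) (\<xi> 2) (\<xi> 1) (\<xi> 2) = 0"
begin

lemma Fall: "(\<forall>y z w. linear (\<lambda>x. F x y z w)) \<and> (\<forall>x z w. linear (\<lambda>y. F x y z w)) \<and>
     (\<forall>x y w. linear (\<lambda>z. F x y z w)) \<and> (\<forall>x y z. linear (\<lambda>w. F x y z w)) \<and>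
     (\<forall>x y z w. F y x z w = - F x y z w) \<and>
     (\<forall>x y z w. F z w x y = F x y z w) \<and>
     (\<forall>x y z w. F x y z w + F x z w y + F x w y z = 0)" using F unfolding curvature_like_def .
lemma Fl1: "linear (\<lambda>x. F x y z w)" by (rule Fall[THEN conjunct1, rule_format])
lemma Fl2: "linear (\<lambda>y. F x y z w)" by (rule Fall[THEN conjunct2, THEN conjunct1, rule_format])
lemma Fl3: "linear (\<lambda>z. F x y z w)" by (rule Fall[THEN conjunct2, THEN conjunct2, THEN conjunct1, rule_format])
lemma Fl4: "linear (\<lambda>w. F x y z w)" by (rule Fall[THEN conjunct2, THEN conjunct2, THEN conjunct2, THEN conjunct1, rule_format])
lemma Fas: "F y x z w = - F x y z w" by (rule Fall[THEN conjunct2, THEN conjunct2, THEN conjunct2, THEN conjunct2, THEN conjunct1, rule_format])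
lemma Fps: "F z w x y = F x y z w" by (rule Fall[THEN conjunct2, THEN conjunct2, THEN conjunct2, THEN conjunct2, THEN conjunct2, THEN conjunct1, rule_format])
lemma Fbi: "F x y z w + F x z w y + F x w y z = 0" by (rule Fall[THEN conjunct2, THEN conjunct2, THEN conjunct2, THEN conjunct2, THEN conjunct2, THEN conjunct2, rule_format])


lemma F_simps[simp]:
  "F (a + b) y z w = F a y z w + F b y z w" "F (r *\<^sub>R a) y z w = r * F a y z w" "F (a - b) y z w = F a y z w - F b y z w" "F (- a) y z w = - F a y z w" "F 0 y z w = 0"
  "F x (a + b) z w = F x a z w + F x b z w" "F x (r *\<^sub>R a) z w = r * F x a z w" "F x (a - b) z w = F x a z w - F x b z w" "F x (- a) z w = - F x a z w" "F x 0 z w = 0"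
  "F x y (a + b) w = F x y a w + F x y b w" "F x y (r *\<^sub>R a) w = r * F x y a w" "F x y (a - b) w = F x y a w - F x y b w" "F x y (- a) w = - F x y a w" "F x y 0 w = 0"
  "F x y z (a + b) = F x y z a + F x y z b" "F x y z (r *\<^sub>R a) = r * F x y z a" "F x y z (a - b) = F x y z a - F x y z b" "F x y z (- a) = - F x y z a" "F x y z 0 = 0"
  using linear_add[OF Fl1] linear_scale[OF Fl1] linear_diff[OF Fl1] linear_neg[OF Fl1] linear_0[OF Fl1]
    linear_add[OF Fl2] linear_scale[OF Fl2] linear_diff[OF Fl2] linear_neg[OF Fl2] linear_0[OF Fl2]
    linear_add[OF Fl3] linear_scale[OF Fl3] linear_diff[OF Fl3] linear_neg[OF Fl3] linear_0[OF Fl3]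
    linear_add[OF Fl4] linear_scale[OF Fl4] linear_diff[OF Fl4] linear_neg[OF Fl4] linear_0[OF Fl4]
  by simp_all

lemma Fsame[simp]: "F a a c d = 0" "F a b c c = 0"
  using Fas[of a a c d] Fas[of c c a b] Fps[of a b c c] by auto

lemma XXII: "\<alpha> \<in> {1,2} \<Longrightarrow> \<beta> \<in> {1,2} \<Longrightarrow> c \<in> range \<phi> \<Longrightarrow> d \<in> range \<phi> \<Longrightarrow> F (\<xi> \<alpha>) (\<xi> \<beta>) c d = 0"
proof -
  assume h: "\<alpha> \<in> {1,2}" "\<beta> \<in> {1,2}" "c \<in> range \<phi>" "d \<in> range \<phi>"
  have "F (\<xi> \<alpha>) (\<xi> \<beta>) c d = - F (\<xi> \<alpha>) c d (\<xi> \<beta>) - F (\<xi> \<alpha>) d (\<xi> \<beta>) c"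
    using Fbi[of "\<xi> \<alpha>" "\<xi> \<beta>" c d] by simp
  also have "F (\<xi> \<alpha>) c d (\<xi> \<beta>) = - F (\<xi> \<alpha>) c (\<xi> \<beta>) d"
    using Fps[of "\<xi> \<alpha>" c d "\<xi> \<beta>"] Fas[of d "\<xi> \<beta>" "\<xi> \<alpha>" c] Fps[of "\<xi> \<beta>" d "\<xi> \<alpha>" c] by linarith
  finally show ?thesis using h2[of c d \<alpha> \<beta>] h2[of d c \<alpha> \<beta>] h gsym[of c d] by simp
qed

lemma vals0:
  assumes "a \<in> range \<phi>" "b \<in> range \<phi>" "c \<in> range \<phi>" "\<alpha> \<in> {1,2}" "\<beta> \<in> {1,2}" "\<gamma> \<in> {1,2}"
  shows "F (\<xi> \<alpha>) a b c = 0" "F a (\<xi> \<alpha>) b c = 0" "F a b (\<xi> \<alpha>) c = 0" "F a b c (\<xi> \<alpha>) = 0"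
    "F (\<xi> \<alpha>) (\<xi> \<beta>) a b = 0" "F a b (\<xi> \<alpha>) (\<xi> \<beta>) = 0"
    "F (\<xi> \<alpha>) a (\<xi> \<beta>) b = eps \<alpha> * eps \<beta> * g a b"
    "F (\<xi> \<alpha>) a b (\<xi> \<beta>) = - (eps \<alpha> * eps \<beta> * g a b)"
    "F a (\<xi> \<alpha>) (\<xi> \<beta>) b = - (eps \<alpha> * eps \<beta> * g a b)"
    "F a (\<xi> \<alpha>) b (\<xi> \<beta>) = eps \<alpha> * eps \<beta> * g a b"
    "F (\<xi> \<alpha>) (\<xi> \<beta>) (\<xi> \<gamma>) a = 0" "F (\<xi> \<alpha>) (\<xi> \<beta>) a (\<xi> \<gamma>) = 0"
    "F (\<xi> \<alpha>) a (\<xi> \<beta>) (\<xi> \<gamma>) = 0" "F a (\<xi> \<alpha>) (\<xi> \<beta>) (\<xi> \<gamma>) = 0"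
proof -
  show "F (\<xi> \<alpha>) a b c = 0" using h1[of a b c \<alpha>] assms Fas[of a "\<xi> \<alpha>" b c] by simp
  show "F a (\<xi> \<alpha>) b c = 0" using h1[of a b c \<alpha>] assms by simp
  show "F a b (\<xi> \<alpha>) c = 0" using h1[of c a b \<alpha>] assms Fas[of c "\<xi> \<alpha>" a b] Fps[of a b "\<xi> \<alpha>" c] by simp
  show "F a b c (\<xi> \<alpha>) = 0" using h1[of c a b \<alpha>] assms Fps[of a b c "\<xi> \<alpha>"] by simp
  show "F (\<xi> \<alpha>) (\<xi> \<beta>) a b = 0" using XXII assms by simp
  show "F a b (\<xi> \<alpha>) (\<xi> \<beta>) = 0" using XXII[of \<alpha> \<beta> a b] Fps[of "\<xi> \<alpha>" "\<xi> \<beta>" a b] assms by simp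
  show "F (\<xi> \<alpha>) a (\<xi> \<beta>) b = eps \<alpha> * eps \<beta> * g a b" using h2 assms by simp
  show "F (\<xi> \<alpha>) a b (\<xi> \<beta>) = - (eps \<alpha> * eps \<beta> * g a b)" using h2[of a b \<alpha> \<beta>] assms Fps[of "\<xi> \<alpha>" a b "\<xi> \<beta>"] Fas[of b "\<xi> \<beta>" "\<xi> \<alpha>" a] Fps[of "\<xi> \<beta>" b "\<xi> \<alpha>" a] by linarith
  show "F a (\<xi> \<alpha>) (\<xi> \<beta>) b = - (eps \<alpha> * eps \<beta> * g a b)" using h2[of a b \<alpha> \<beta>] assms Fas[of a "\<xi> \<alpha>" "\<xi> \<beta>" b] by linarith
  show "F a (\<xi> \<alpha>) b (\<xi> \<beta>) = eps \<alpha> * eps \<beta> * g a b" using h2[of a b \<alpha> \<beta>] assms Fas[of a "\<xi> \<alpha>" b "\<xi> \<beta>"]  Fps[of "\<xi> \<alpha>" a b "\<xi> \<beta>"] Fas[of b "\<xi> \<beta>" "\<xi> \<alpha>" a] Fps[of "\<xi> \<beta>" b "\<xi> \<alpha>" a] by linarith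
  show "F (\<xi> \<alpha>) (\<xi> \<beta>) (\<xi> \<gamma>) a = 0" using h3[of a \<gamma> \<alpha> \<beta>] assms Fps[of "\<xi> \<gamma>" a "\<xi> \<alpha>" "\<xi> \<beta>"] by linarith
  show "F (\<xi> \<alpha>) (\<xi> \<beta>) a (\<xi> \<gamma>) = 0" using h3[of a \<gamma> \<alpha> \<beta>] assms Fps[of "\<xi> \<alpha>" "\<xi> \<beta>" a "\<xi> \<gamma>"] Fas[of a "\<xi> \<gamma>" "\<xi> \<alpha>" "\<xi> \<beta>"] by linarith
  show "F (\<xi> \<alpha>) a (\<xi> \<beta>) (\<xi> \<gamma>) = 0" using h3 assms by simp
  show "F a (\<xi> \<alpha>) (\<xi> \<beta>) (\<xi> \<gamma>) = 0" using h3[of a \<alpha> \<beta> \<gamma>] assms Fas[of a "\<xi> \<alpha>" "\<xi> \<beta>" "\<xi> \<gamma>"] by linarith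
qed

lemma vals[simp]:
  "\<lbrakk>a \<in> range \<phi>; b \<in> range \<phi>; c \<in> range \<phi>; \<alpha> \<in> {1,2}\<rbrakk> \<Longrightarrow> F (\<xi> \<alpha>) a b c = 0"
  "\<lbrakk>a \<in> range \<phi>; b \<in> range \<phi>; c \<in> range \<phi>; \<alpha> \<in> {1,2}\<rbrakk> \<Longrightarrow> F a (\<xi> \<alpha>) b c = 0"
  "\<lbrakk>a \<in> range \<phi>; b \<in> range \<phi>; c \<in> range \<phi>; \<alpha> \<in> {1,2}\<rbrakk> \<Longrightarrow> F a b (\<xi> \<alpha>) c = 0"
  "\<lbrakk>a \<in> range \<phi>; b \<in> range \<phi>; c \<in> range \<phi>; \<alpha> \<in> {1,2}\<rbrakk> \<Longrightarrow> F a b c (\<xi> \<alpha>) = 0"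
  "\<lbrakk>a \<in> range \<phi>; b \<in> range \<phi>; \<alpha> \<in> {1,2}; \<beta> \<in> {1,2}\<rbrakk> \<Longrightarrow> F (\<xi> \<alpha>) (\<xi> \<beta>) a b = 0"
  "\<lbrakk>a \<in> range \<phi>; b \<in> range \<phi>; \<alpha> \<in> {1,2}; \<beta> \<in> {1,2}\<rbrakk> \<Longrightarrow> F a b (\<xi> \<alpha>) (\<xi> \<beta>) = 0"
  "\<lbrakk>a \<in> range \<phi>; b \<in> range \<phi>; \<alpha> \<in> {1,2}; \<beta> \<in> {1,2}\<rbrakk> \<Longrightarrow> F (\<xi> \<alpha>) a (\<xi> \<beta>) b = eps \<alpha> * eps \<beta> * g a b"
  "\<lbrakk>a \<in> range \<phi>; b \<in> range \<phi>; \<alpha> \<in> {1,2}; \<beta> \<in> {1,2}\<rbrakk> \<Longrightarrow> F (\<xi> \<alpha>) a b (\<xi> \<beta>) = - (eps \<alpha> * eps \<beta> * g a b)"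
  "\<lbrakk>a \<in> range \<phi>; b \<in> range \<phi>; \<alpha> \<in> {1,2}; \<beta> \<in> {1,2}\<rbrakk> \<Longrightarrow> F a (\<xi> \<alpha>) (\<xi> \<beta>) b = - (eps \<alpha> * eps \<beta> * g a b)"
  "\<lbrakk>a \<in> range \<phi>; b \<in> range \<phi>; \<alpha> \<in> {1,2}; \<beta> \<in> {1,2}\<rbrakk> \<Longrightarrow> F a (\<xi> \<alpha>) b (\<xi> \<beta>) = eps \<alpha> * eps \<beta> * g a b"
  "\<lbrakk>a \<in> range \<phi>; \<alpha> \<in> {1,2}; \<beta> \<in> {1,2}; \<gamma> \<in> {1,2}\<rbrakk> \<Longrightarrow> F (\<xi> \<alpha>) (\<xi> \<beta>) (\<xi> \<gamma>) a = 0"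
  "\<lbrakk>a \<in> range \<phi>; \<alpha> \<in> {1,2}; \<beta> \<in> {1,2}; \<gamma> \<in> {1,2}\<rbrakk> \<Longrightarrow> F (\<xi> \<alpha>) (\<xi> \<beta>) a (\<xi> \<gamma>) = 0"
  "\<lbrakk>a \<in> range \<phi>; \<alpha> \<in> {1,2}; \<beta> \<in> {1,2}; \<gamma> \<in> {1,2}\<rbrakk> \<Longrightarrow> F (\<xi> \<alpha>) a (\<xi> \<beta>) (\<xi> \<gamma>) = 0"
  "\<lbrakk>a \<in> range \<phi>; \<alpha> \<in> {1,2}; \<beta> \<in> {1,2}; \<gamma> \<in> {1,2}\<rbrakk> \<Longrightarrow> F a (\<xi> \<alpha>) (\<xi> \<beta>) (\<xi> \<gamma>) = 0"
  using vals0(1)[of a b c \<alpha> \<alpha> \<alpha>] apply blast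
  using vals0(2)[of a b c \<alpha> \<alpha> \<alpha>] apply blast
  using vals0(3)[of a b c \<alpha> \<alpha> \<alpha>] apply blast
  using vals0(4)[of a b c \<alpha> \<alpha> \<alpha>] apply blast
  using vals0(5)[of a b a \<alpha> \<beta> \<alpha>] apply blast
  using vals0(6)[of a b a \<alpha> \<beta> \<alpha>] apply blast
  using vals0(7)[of a b a \<alpha> \<beta> \<alpha>] apply blast
  using vals0(8)[of a b a \<alpha> \<beta> \<alpha>] apply blast
  using vals0(9)[of a b a \<alpha> \<beta> \<alpha>] apply blast
  using vals0(10)[of a b a \<alpha> \<beta> \<alpha>] apply blast
  using vals0(11)[of a a a \<alpha> \<beta> \<gamma>] apply blast
  using vals0(12)[of a a a \<alpha> \<beta> \<gamma>] apply blast
  using vals0(13)[of a a a \<alpha> \<beta> \<gamma>] apply blast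
  using vals0(14)[of a a a \<alpha> \<beta> \<gamma>] apply blast
  done

lemma XXXX[simp]: "\<alpha> \<in> {1,2} \<Longrightarrow> \<beta> \<in> {1,2} \<Longrightarrow> \<gamma> \<in> {1,2} \<Longrightarrow> \<delta> \<in> {1,2} \<Longrightarrow> F (\<xi> \<alpha>) (\<xi> \<beta>) (\<xi> \<gamma>) (\<xi> \<delta>) = 0"
proof -
  have a: "F (\<xi> 2) (\<xi> 1) (\<xi> 1) (\<xi> 2) = 0" using h4 Fas[of "\<xi> 1" "\<xi> 2"] by simp
  have b: "F (\<xi> 1) (\<xi> 2) (\<xi> 2) (\<xi> 1) = 0" using h4 Fps[of "\<xi> 2" "\<xi> 1" "\<xi> 1" "\<xi> 2"] a by simp
  have c: "F (\<xi> 2) (\<xi> 1) (\<xi> 2) (\<xi> 1) = 0" using b Fas[of "\<xi> 1" "\<xi> 2" "\<xi> 2" "\<xi> 1"] by simp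
  show "\<alpha> \<in> {1,2} \<Longrightarrow> \<beta> \<in> {1,2} \<Longrightarrow> \<gamma> \<in> {1,2} \<Longrightarrow> \<delta> \<in> {1,2} \<Longrightarrow> F (\<xi> \<alpha>) (\<xi> \<beta>) (\<xi> \<gamma>) (\<xi> \<delta>) = 0"
    using h4 a b c by (auto simp only: insert_iff empty_iff Fsame)
qed


lemma main_b:
  assumes I: "\<And>a b c d. a \<in> range \<phi> \<Longrightarrow> b \<in> range \<phi> \<Longrightarrow> c \<in> range \<phi> \<Longrightarrow> d \<in> range \<phi> \<Longrightarrow> F a b c d = g b c * g a d - g a c * g b d"
  shows "F x y v z = g (S_lower \<phi> g x y v) z - g (S_upper \<xi> \<eta> g x y v) z"
proof -
  have "F (P x + \<eta> 1 x *\<^sub>R \<xi> 1 + \<eta> 2 x *\<^sub>R \<xi> 2) (P y + \<eta> 1 y *\<^sub>R \<xi> 1 + \<eta> 2 y *\<^sub>R \<xi> 2)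
          (P v + \<eta> 1 v *\<^sub>R \<xi> 1 + \<eta> 2 v *\<^sub>R \<xi> 2) (P z + \<eta> 1 z *\<^sub>R \<xi> 1 + \<eta> 2 z *\<^sub>R \<xi> 2)
     = g (S_lower \<phi> g (P x + \<eta> 1 x *\<^sub>R \<xi> 1 + \<eta> 2 x *\<^sub>R \<xi> 2) (P y + \<eta> 1 y *\<^sub>R \<xi> 1 + \<eta> 2 y *\<^sub>R \<xi> 2)
          (P v + \<eta> 1 v *\<^sub>R \<xi> 1 + \<eta> 2 v *\<^sub>R \<xi> 2)) (P z + \<eta> 1 z *\<^sub>R \<xi> 1 + \<eta> 2 z *\<^sub>R \<xi> 2)
       - g (S_upper \<xi> \<eta> g (P x + \<eta> 1 x *\<^sub>R \<xi> 1 + \<eta> 2 x *\<^sub>R \<xi> 2) (P y + \<eta> 1 y *\<^sub>R \<xi> 1 + \<eta> 2 y *\<^sub>R \<xi> 2)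
          (P v + \<eta> 1 v *\<^sub>R \<xi> 1 + \<eta> 2 v *\<^sub>R \<xi> 2)) (P z + \<eta> 1 z *\<^sub>R \<xi> 1 + \<eta> 2 z *\<^sub>R \<xi> 2)"
    apply (simp add: S_lower_def S_upper_def eta_tilde_def xi_tilde_def I phi2P gphi)
    apply (simp add: gsym[of "P _" "P _"])
    apply (simp add: algebra_simps)
    done
  then show ?thesis by (simp only: dec)
qed


lemma b_to_a:
  assumes B: "\<forall>x y v z. F x y v z = g (S_lower \<phi> g x y v) z - g (S_upper \<xi> \<eta> g x y v) z"
  shows "\<forall>u\<in>N_phi \<phi> g (\<xi> 1). \<forall>y. y \<in> range \<phi> \<and> g u y = 0 \<longrightarrow> F u y u y = 0"
proof (intro ballI allI impI)
  fix u y assume u: "u \<in> N_phi \<phi> g (\<xi> 1)" and yy: "y \<in> range \<phi> \<and> g u y = 0"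
  then obtain x where ux: "u = \<xi> 1 + x" and x: "x \<in> range \<phi>" and xx: "g x x = 1" unfolding N_phi_def by blast
  have y: "y \<in> range \<phi>" using yy by simp
  have ex: "\<eta> 1 x = 0" "\<eta> 2 x = 0" "\<eta> 1 y = 0" "\<eta> 2 y = 0" using x y by auto
  have xy: "g x y = 0" using yy ux ex by simp
  have pp: "\<phi> (\<phi> x) = - x" "\<phi> (\<phi> y) = - y" using x y by (simp_all add: phi2P P_range)
  have "F u y u y = g (S_lower \<phi> g u y u) y - g (S_upper \<xi> \<eta> g u y u) y" using B by blast
  also have "\<dots> = 0" unfolding ux
    by (simp add: S_lower_def S_upper_def eta_tilde_def xi_tilde_def gphi pp ex xx xy gsym[of y x])
  finally show "F u y u y = 0" .
qed

lemma sec: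
  assumes A: "\<forall>u\<in>N_phi \<phi> g (\<xi> 1). \<forall>y. y \<in> range \<phi> \<and> g u y = 0 \<longrightarrow> F u y u y = 0"
    and x: "x \<in> range \<phi>" and y: "y \<in> range \<phi>"
  shows "F x y x y = - (g x x * g y y - g x y * g x y)"
proof (cases "x = 0")
  case True then show ?thesis by simp
next
  case False
  have gp: "g x x > 0" using range_pos x False by blast
  define c where "c = sqrt (g x x)"
  have c0: "c > 0" using gp c_def by simp
  have cc: "c * c = g x x" using gp c_def by simp
  define e where "e = (1 / c) *\<^sub>R x"
  have xe: "x = c *\<^sub>R e" using c0 e_def by simp
  have e: "e \<in> range \<phi>" using x range_sub e_def by (simp add: subspace_scale)
  have ee: "g e e = 1" using c0 unfolding e_def by (simp add: cc[symmetric])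
  define k where "k = g e y"
  define y' where "y' = y - k *\<^sub>R e"
  have y': "y' \<in> range \<phi>" using y e range_sub y'_def by (simp add: subspace_diff subspace_scale)
  have ey': "g e y' = 0" using ee by (simp add: y'_def k_def)
  have uN: "\<xi> 1 + e \<in> N_phi \<phi> g (\<xi> 1)" using e ee unfolding N_phi_def by blast
  have "g (\<xi> 1 + e) y' = 0" using ey' eta_range(1)[OF y'] by simp
  then have "F (\<xi> 1 + e) y' (\<xi> 1 + e) y' = 0" using A uN y' by blast
  then have Fe: "F e y' e y' = - g y' y'" using e y' by simp
  have ye: "y = y' + k *\<^sub>R e" by (simp add: y'_def)
  have "F x y x y = c * c * F e y' e y'" unfolding xe ye by simp
  also have "g y' y' = g y y - k * k" using ee by (simp add: y'_def k_def gsym[of y e] algebra_simps)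
  ultimately have "F x y x y = - (c * c) * (g y y - k * k)" using Fe by (simp add: algebra_simps)
  moreover have "g x y = c * k" by (simp add: xe k_def)
  ultimately show ?thesis using cc by (simp add: algebra_simps)
qed

lemma a_to_I:
  assumes A: "\<forall>u\<in>N_phi \<phi> g (\<xi> 1). \<forall>y. y \<in> range \<phi> \<and> g u y = 0 \<longrightarrow> F u y u y = 0"
    and x: "x \<in> range \<phi>" and y: "y \<in> range \<phi>" and v: "v \<in> range \<phi>" and z: "z \<in> range \<phi>"
  shows "F x y v z = g y v * g x z - g x v * g y z"
proof -
  define G where "G a b c d = F a b c d - (g b c * g a d - g a c * g b d)" for a b c d
  have "G x y v z = 0"
  proof (rule polarize[of "range \<phi>" G])
    show "\<And>a b. a \<in> range \<phi> \<Longrightarrow> b \<in> range \<phi> \<Longrightarrow> a + b \<in> range \<phi>" using range_sub by (simp add: subspace_add)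
    show "\<And>a b y v z. G (a + b) y v z = G a y v z + G b y v z" by (simp add: G_def algebra_simps)
    show "\<And>a b x v z. G x (a + b) v z = G x a v z + G x b v z" by (simp add: G_def algebra_simps)
    show "\<And>a b x y z. G x y (a + b) z = G x y a z + G x y b z" by (simp add: G_def algebra_simps)
    show "\<And>a b x y v. G x y v (a + b) = G x y v a + G x y v b" by (simp add: G_def algebra_simps)
    show "G y x v z = - G x y v z" for x y v z :: 'v unfolding G_def using Fas[of x y v z] by (simp add: algebra_simps)
    show "G v z x y = G x y v z" for x y v z :: 'v unfolding G_def Fps[of x y v z] gsym[of z x] gsym[of v y] gsym[of v x] gsym[of z y] by (simp add: algebra_simps)
    show "G x y v z + G x v z y + G x z y v = 0" for x y v z :: 'v unfolding G_def gsym[of v y] gsym[of z v] gsym[of z y] using Fbi[of x y v z]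
      by (simp add: algebra_simps)
    show "\<And>x y. x \<in> range \<phi> \<Longrightarrow> y \<in> range \<phi> \<Longrightarrow> G x y x y = 0"
      unfolding G_def using sec[OF A] by (simp add: gsym)
  qed (simp_all add: x y v z)
  then show ?thesis by (simp add: G_def)
qed


end
theorem lemma5p6:
  fixes n :: nat and \<phi> :: "'v::euclidean_space \<Rightarrow> 'v" and \<xi> :: "nat \<Rightarrow> 'v"
    and \<eta> :: "nat \<Rightarrow> 'v \<Rightarrow> real" and g :: "'v \<Rightarrow> 'v \<Rightarrow> real"
    and F :: "'v \<Rightarrow> 'v \<Rightarrow> 'v \<Rightarrow> 'v \<Rightarrow> real"
  assumes n: "n \<ge> 1"
    and str: "lorentz_gf_f_space n \<phi> \<xi> \<eta> g"
    and F: "curvature_like F"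
    and h1: "\<And>x y v \<alpha>. x \<in> range \<phi> \<Longrightarrow> y \<in> range \<phi> \<Longrightarrow> v \<in> range \<phi> \<Longrightarrow> \<alpha> \<in> {1,2}
               \<Longrightarrow> F x (\<xi> \<alpha>) y v = 0"
    and h2: "\<And>x y \<alpha> \<beta>. x \<in> range \<phi> \<Longrightarrow> y \<in> range \<phi> \<Longrightarrow> \<alpha> \<in> {1,2} \<Longrightarrow> \<beta> \<in> {1,2}
               \<Longrightarrow> F (\<xi> \<alpha>) x (\<xi> \<beta>) y = eps \<alpha> * eps \<beta> * g x y"
    and h3: "\<And>x \<alpha> \<beta> \<gamma>. x \<in> range \<phi> \<Longrightarrow> \<alpha> \<in> {1,2} \<Longrightarrow> \<beta> \<in> {1,2} \<Longrightarrow> \<gamma> \<in> {1,2}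
               \<Longrightarrow> F (\<xi> \<alpha>) x (\<xi> \<beta>) (\<xi> \<gamma>) = 0"
    and h4: "F (\<xi> 1) (\<xi> 2) (\<xi> 1) (\<xi> 2) = 0"
  shows "(\<forall>u\<in>N_phi \<phi> g (\<xi> 1). \<forall>y. y \<in> range \<phi> \<and> g u y = 0 \<longrightarrow> F u y u y = 0)
     \<longleftrightarrow> (\<forall>x y v z. F x y v z = g (S_lower \<phi> g x y v) z - g (S_upper \<xi> \<eta> g x y v) z)"
proof -
  interpret LF2 n \<phi> \<xi> \<eta> g F
    by unfold_locales (fact str F h1 h2 h3 h4)+
  show ?thesis
  proof
    assume A: "\<forall>u\<in>N_phi \<phi> g (\<xi> 1). \<forall>y. y \<in> range \<phi> \<and> g u y = 0 \<longrightarrow> F u y u y = 0"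
    show "\<forall>x y v z. F x y v z = g (S_lower \<phi> g x y v) z - g (S_upper \<xi> \<eta> g x y v) z"
      using main_b[OF a_to_I[OF A]] by blast
  next
    assume "\<forall>x y v z. F x y v z = g (S_lower \<phi> g x y v) z - g (S_upper \<xi> \<eta> g x y v) z"
    then show "\<forall>u\<in>N_phi \<phi> g (\<xi> 1). \<forall>y. y \<in> range \<phi> \<and> g u y = 0 \<longrightarrow> F u y u y = 0"
      by (rule b_to_a)
  qed
qed

end
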